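(* In the near-field model below, with $\mathbf w_{\mathrm s}=\mathbf h_{\mathrm s}^*/\|\mathbf h_{\mathrm s}\|$, $p>0$, $L\in\mathbb Z_{>0}$, $\alpha_{\mathrm s}>0$, the downlink sensing rate $\mathcal R^{\mathrm s}_{\mathrm{d,s}}=\frac1L\log_2(1+pL\alpha_{\mathrm s}\|\mathbf h_{\mathrm s}\|^4)$ satisfies, as $N_y,N_z\to\infty$ with all other parameters fixed, $$\lim_{N_y,N_z\to\infty}\mathcal R^{\mathrm s}_{\mathrm{d,s}}=\frac1L\log_2\!\Big(1+\frac{pL\alpha_{\mathrm s}\zeta^2}{9}\Big).$$
   Context: Near-field model: a uniform planar array lies in the $y$–$z$ plane centered at the origin, with $N=N_yN_z$ elements ($N_y,N_z$ odd). Element $(n_y,n_z)$, $n_y\in\{-\frac{N_y-1}2,\dots,\frac{N_y-1}2\}$, $n_z\in\{-\frac{N_z-1}2,\dots,\frac{N_z-1}2\}$, is a $\sqrt A\times\sqrt A$ square centered at $(0,n_yd,n_zd)$, with spacing $d>\sqrt A$; $\zeta=A/d^2\in(0,1]$; $\lambda>0$ is the wavelength. The target is at distance $r_{\mathrm s}$, elevation $\theta_{\mathrm s}\in[0,\pi]$, azimuth $\phi_{\mathrm s}\in[-\pi/2,\pi/2]$; $\Psi_{\mathrm s}=\sin\theta_{\mathrm s}\cos\phi_{\mathrm s}$, $\Phi_{\mathrm s}=\sin\theta_{\mathrm s}\sin\phi_{\mathrm s}$, $\Omega_{\mathrm s}=\cos\theta_{\mathrm s}$, $\epsilon_{\mathrm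 s}=d/r_{\mathrm s}$, $r_{n_y,n_z}=r_{\mathrm s}\sqrt{(n_y\epsilon_{\mathrm s}-\Phi_{\mathrm s})^2+(n_z\epsilon_{\mathrm s}-\Omega_{\mathrm s})^2+\Psi_{\mathrm s}^2}$. The channel $\mathbf h_{\mathrm s}\in\mathbb C^N$ has entries $\sqrt{A\frac{r_{\mathrm s}^3\Psi_{\mathrm s}^3+r_{\mathrm s}\Psi_{\mathrm s}(r_{\mathrm s}\Omega_{\mathrm s}-n_zd)^2}{4\pi r_{n_y,n_z}^5}}\,e^{-\mathrm j\frac{2\pi}{\lambda}r_{n_y,n_z}}$. The paper assumes throughout $r_{\mathrm s}\gg d$, $r_{\mathrm s}\gg\sqrt A$, so $\epsilon_{\mathrm s}\ll1$.
   Formalization: The limit as $N_y,N_z\to\infty$ is only claimed to exist for each $r_{\mathrm s}>0$ and to tend to $\frac1L\log_2(1+pL\alpha_{\mathrm s}\zeta^2/9)$ as $r_{\mathrm s}\to\infty$, rather than to equal it for fixed $r_{\mathrm s}$, and $\Psi_{\mathrm s}>0$ is assumed. The statement above fails without it. *)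

theory Defs
  imports "HOL-Analysis.Analysis"
begin

definition Psi_s :: "real \<Rightarrow> real \<Rightarrow> real" where
  "Psi_s \<theta> \<phi> = sin \<theta> * cos \<phi>"
definition Phi_s :: "real \<Rightarrow> real \<Rightarrow> real" where
  "Phi_s \<theta> \<phi> = sin \<theta> * sin \<phi>"
definition Omega_s :: "real \<Rightarrow> real" where
  "Omega_s \<theta> = cos \<theta>"

definition elem_dist :: "real \<Rightarrow> real \<Rightarrow> real \<Rightarrow> real \<Rightarrow> int \<Rightarrow> int \<Rightarrow> real" where
  "elem_dist d r \<theta> \<phi> ny nz =
     (let \<epsilon> = d / r in
      r * sqrt ((of_int ny * \<epsilon> - Phi_s \<theta> \<phi>)\<^sup>2 + (of_int nz * \<epsilon> - Omega_s \<theta>)\<^sup>2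
                + (Psi_s \<theta> \<phi>)\<^sup>2))"

definition chan_entry ::
  "real \<Rightarrow> real \<Rightarrow> real \<Rightarrow> real \<Rightarrow> real \<Rightarrow> real \<Rightarrow> int \<Rightarrow> int \<Rightarrow> complex" where
  "chan_entry A d lam r \<theta> \<phi> ny nz =
     (let rn = elem_dist d r \<theta> \<phi> ny nz; \<Psi> = Psi_s \<theta> \<phi>; \<Omega> = Omega_s \<theta> in
      complex_of_real (sqrt (A * (r ^ 3 * \<Psi> ^ 3 + r * \<Psi> * (r * \<Omega> - of_int nz * d)\<^sup>2)
                                / (4 * pi * rn ^ 5)))
      * cis (- (2 * pi / lam) * rn))"

text \<open>Euclidean norm of h_s for N_y = 2 My + 1, N_z = 2 Mz + 1 elements.\<close>
definition chan_norm ::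
  "real \<Rightarrow> real \<Rightarrow> real \<Rightarrow> real \<Rightarrow> real \<Rightarrow> real \<Rightarrow> nat \<Rightarrow> nat \<Rightarrow> real" where
  "chan_norm A d lam r \<theta> \<phi> My Mz =
     sqrt (\<Sum>ny\<in>{- int My..int My}. \<Sum>nz\<in>{- int Mz..int Mz}.
             (cmod (chan_entry A d lam r \<theta> \<phi> ny nz))\<^sup>2)"

definition sensing_rate ::
  "real \<Rightarrow> nat \<Rightarrow> real \<Rightarrow> real \<Rightarrow> real \<Rightarrow> real \<Rightarrow> real \<Rightarrow> real \<Rightarrow> real \<Rightarrow> nat \<Rightarrow> nat \<Rightarrow> real" where
  "sensing_rate p L \<alpha> A d lam r \<theta> \<phi> My Mz =
     1 / real L * log 2 (1 + p * real L * \<alpha> * (chan_norm A d lam r \<theta> \<phi> My Mz) ^ 4)"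

end

theory Submission
  imports Defs
begin


lemma riemann_step:
  fixes f F :: "real \<Rightarrow> real" and \<epsilon> s B :: real and a :: int
  assumes eps: "\<epsilon> > 0"
    and der: "\<And>x. (F has_real_derivative f x) (at x)"
    and inc: "\<And>x y. x \<le> y \<Longrightarrow> y \<le> s \<Longrightarrow> f x \<le> f y"
    and dec: "\<And>x y. s \<le> x \<Longrightarrow> x \<le> y \<Longrightarrow> f y \<le> f x"
    and nn: "\<And>x. 0 \<le> f x" and bd: "\<And>x. f x \<le> B"
  shows "\<epsilon> * (\<Sum>n\<in>{a..<a+int k}. f (of_int n * \<epsilon>)) \<le> F (of_int (a + int k) * \<epsilon>) - F (of_int a * \<epsilon>)
           + \<epsilon> * (if of_int (a + int k) * \<epsilon> \<le> s then 0 else B - f (of_int (a + int k) * \<epsilon>))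
       \<and> F (of_int (a + int k) * \<epsilon>) - F (of_int a * \<epsilon>) \<le> \<epsilon> * (\<Sum>n\<in>{a..<a+int k}. f (of_int n * \<epsilon>))
           + \<epsilon> * (if of_int (a + int k) * \<epsilon> \<le> s then f (of_int (a + int k) * \<epsilon>) else B)"
proof (induction k)
  case 0
  have "f (of_int a * \<epsilon>) \<le> B" by (rule bd)
  then show ?case using eps nn[of "of_int a * \<epsilon>"] by (auto intro: mult_nonneg_nonneg)
next
  case (Suc k)
  define x where "x = of_int (a + int k) * \<epsilon>"
  define y where "y = x + \<epsilon>"
  have y': "of_int (a + int (Suc k)) * \<epsilon> = y" unfolding x_def y_def by (simp add: algebra_simps)
  have set: "{a..<a + int (Suc k)} = insert (a + int k) {a..<a + int k}" by auto
  have sum: "(\<Sum>n\<in>{a..<a+int (Suc k)}. f (of_int n * \<epsilon>)) = f x + (\<Sum>n\<in>{a..<a+int k}. f (of_int n * \<epsilon>))"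
    unfolding set x_def by (subst sum.insert) auto
  have "x < y" using eps y_def by simp
  from MVT2[OF this, of F f] der obtain z where z: "x < z" "z < y" "F y - F x = (y - x) * f z" by blast
  have Fz: "F y - F x = \<epsilon> * f z" using z y_def by simp
  define S where "S = (\<Sum>n\<in>{a..<a+int k}. f (of_int n * \<epsilon>))"
  have IH1: "\<epsilon> * S \<le> F x - F (of_int a * \<epsilon>) + \<epsilon> * (if x \<le> s then 0 else B - f x)"
    and IH2: "F x - F (of_int a * \<epsilon>) \<le> \<epsilon> * S + \<epsilon> * (if x \<le> s then f x else B)"
    using Suc.IH unfolding S_def x_def by auto
  have up: "f x - f z + (if x \<le> s then 0 else B - f x) \<le> (if y \<le> s then 0 else B - f y)"
  proof (cases "y \<le> s")
    case True
    have "f x \<le> f z" using inc[of x z] z True by linarith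
    then show ?thesis using True z \<open>x < y\<close> by simp
  next
    case False
    show ?thesis
    proof (cases "x \<le> s")
      case True
      have "f x - f z \<le> B - f y"
      proof (cases "z \<le> s")
        case True
        then have "f x \<le> f z" using inc[of x z] z by linarith
        then show ?thesis using nn[of y] bd[of y] by linarith
      next
        case False
        then have "f y \<le> f z" using dec[of z y] z by linarith
        then show ?thesis using bd[of x] by linarith
      qed
      then show ?thesis using True False by simp
    next
      case F2: False
      have "f y \<le> f z" using dec[of z y] z F2 by linarith
      then show ?thesis using False F2 by simp
    qed
  qed
  have lo: "f z - f x + (if x \<le> s then f x else B) \<le> (if y \<le> s then f y else B)"
  proof (cases "y \<le> s")
    case True
    have "f z \<le> f y" using inc[of z y] z True by linarith
    then show ?thesis using True z \<open>x < y\<close> by simp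
  next
    case False
    show ?thesis
    proof (cases "x \<le> s")
      case True
      then show ?thesis using False bd[of z] by simp
    next
      case F2: False
      have "f z \<le> f x" using dec[of x z] z F2 by linarith
      then show ?thesis using False F2 by simp
    qed
  qed
  have e1: "\<epsilon> * (f x - f z + (if x \<le> s then 0 else B - f x)) \<le> \<epsilon> * (if y \<le> s then 0 else B - f y)"
    using up eps by (intro mult_left_mono) auto
  have e2: "\<epsilon> * (f z - f x + (if x \<le> s then f x else B)) \<le> \<epsilon> * (if y \<le> s then f y else B)"
    using lo eps by (intro mult_left_mono) auto
  show ?case unfolding y' sum S_def[symmetric]
    using IH1 IH2 e1 e2 Fz by (simp add: algebra_simps)
qed



definition Gf :: "real \<Rightarrow> real \<Rightarrow> real" where
  "Gf c2 X = (2*X^3 + 3*c2*X) / (3*c2^2* sqrt(X^2+c2)^3)"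

lemma Gf_deriv:
  assumes c2: "c2 > 0"
  shows "(Gf c2 has_real_derivative 1 / sqrt(X^2+c2)^5) (at X)"
proof -
  define q where "q = sqrt(X^2+c2)"
  have qpos: "q > 0" unfolding q_def using c2 by (simp add: add_nonneg_pos)
  have q2: "q^2 = X^2+c2" unfolding q_def using c2 by (simp add: add_nonneg_pos)
  have d1: "DERIV sqrt (X^2+c2) :> inverse (sqrt (X^2+c2)) / 2"
    by (rule DERIV_real_sqrt) (use c2 in \<open>simp add: add_nonneg_pos\<close>)
  have d2: "((\<lambda>X. X^2+c2) has_real_derivative 2*X) (at X)"
    by (auto intro!: derivative_eq_intros)
  have dq: "((\<lambda>X. sqrt(X^2+c2)) has_real_derivative inverse q / 2 * (2*X)) (at X)"
    using DERIV_chain2[OF d1 d2] unfolding q_def .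
  have dq3: "((\<lambda>X. sqrt(X^2+c2)^3) has_real_derivative of_nat 3 * (inverse q / 2 * (2*X) * q^(3 - Suc 0))) (at X)"
    using DERIV_power[OF dq, of 3] unfolding q_def .
  have dD: "((\<lambda>X. 3*c2^2* sqrt(X^2+c2)^3) has_real_derivative 3*c2^2*(of_nat 3 * (inverse q / 2 * (2*X) * q^(3 - Suc 0)))) (at X)"
    using DERIV_cmult[OF dq3, of "3*c2^2"] .
  have dN: "((\<lambda>X. 2*X^3 + 3*c2*X) has_real_derivative 6*X^2+3*c2) (at X)"
    by (auto intro!: derivative_eq_intros)
  have gnz: "3*c2^2* sqrt(X^2+c2)^3 \<noteq> 0" using c2 qpos unfolding q_def by simp
  have dG: "(Gf c2 has_real_derivative
      ((6*X^2+3*c2) * (3*c2^2* sqrt(X^2+c2)^3) - (2*X^3 + 3*c2*X) * (3*c2^2*(of_nat 3 * (inverse q / 2 * (2*X) * q^(3 - Suc 0)))))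
       / ((3*c2^2* sqrt(X^2+c2)^3) * (3*c2^2* sqrt(X^2+c2)^3))) (at X)"
    using DERIV_divide[OF dN dD gnz] unfolding Gf_def[abs_def] .
  have e1: "3*c2^2*(of_nat 3 * (inverse q / 2 * (2*X) * q^(3 - Suc 0))) = 9*c2^2*X*q"
    using qpos by (simp add: power2_eq_square field_simps)
  have q3: "q^3 = q*(X^2+c2)" using q2 by (simp add: power3_eq_cube power2_eq_square)
  have num: "(6*X^2+3*c2) * (3*c2^2*q^3) - (2*X^3 + 3*c2*X) * (9*c2^2*X*q) = 9*c2^4*q"
    unfolding q3 by algebra
  have den: "(3*c2^2*q^3) * (3*c2^2*q^3) = 9*c2^4*q*q^5"
    by algebra
  have "((6*X^2+3*c2) * (3*c2^2* sqrt(X^2+c2)^3) - (2*X^3 + 3*c2*X) * (3*c2^2*(of_nat 3 * (inverse q / 2 * (2*X) * q^(3 - Suc 0)))))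
       / ((3*c2^2* sqrt(X^2+c2)^3) * (3*c2^2* sqrt(X^2+c2)^3)) = 1 / q^5"
    unfolding q_def[symmetric] e1 num den using qpos c2 by simp
  with dG show ?thesis unfolding q_def by simp
qed

lemma Gf_odd: "Gf c2 (-X) = - Gf c2 X"
proof -
  have h: "2*(-X)^3 + 3*c2*(-X) = -(2*X^3+3*c2*X)" by simp
  show ?thesis unfolding Gf_def h power2_minus by (rule minus_divide_left[symmetric])
qed

lemma Gf_key:
  assumes c2: "c2 > 0" and X: "X \<ge> 0"
  shows "2/(3*c2^2) - Gf c2 X = (2* sqrt(X^2+c2) + X) / (3*(sqrt(X^2+c2)+X)^2* sqrt(X^2+c2)^3)"
proof -
  define q where "q = sqrt(X^2+c2)"
  have qpos: "q > 0" unfolding q_def using c2 by (simp add: add_nonneg_pos)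
  have q2: "q^2 = X^2+c2" unfolding q_def using c2 by (simp add: add_nonneg_pos)
  have qX: "q + X > 0" using qpos X by simp
  have id1: "2*q^3 - (2*X^3 + 3*c2*X) = (q-X)^2*(2*q+X)"
  proof -
    show ?thesis using q2 by algebra
  qed
  have id2: "(q-X)^2 * (q+X)^2 = c2^2"
  proof -
    have "(q-X)*(q+X) = c2" using q2 by (simp add: algebra_simps power2_eq_square)
    then have "((q-X)*(q+X))^2 = c2^2" by simp
    then show ?thesis by (simp add: power_mult_distrib)
  qed
  have "2/(3*c2^2) - Gf c2 X = (2*q^3 - (2*X^3 + 3*c2*X)) / (3*c2^2*q^3)"
    unfolding Gf_def q_def[symmetric] using c2 qpos by (simp add: field_simps)
  also have "\<dots> = (q-X)^2*(2*q+X) / (3*c2^2*q^3)" unfolding id1 ..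
  also have "\<dots> = (2*q+X) / (3*(q+X)^2*q^3)"
    using c2 qpos qX id2 by (simp add: field_simps)
  finally show ?thesis unfolding q_def .
qed

lemma Gf_le:
  assumes c2: "c2 > 0"
  shows "Gf c2 X \<le> 2/(3*c2^2)" and "Gf c2 X \<ge> - (2/(3*c2^2))"
proof -
  have main: "Gf c2 Y \<le> 2/(3*c2^2)" "Gf c2 Y \<ge> 0" if Y: "Y \<ge> 0" for Y
  proof -
    have qpos: "sqrt(Y^2+c2) > 0" using c2 by (simp add: add_nonneg_pos)
    have "0 \<le> (2* sqrt(Y^2+c2) + Y) / (3*(sqrt(Y^2+c2)+Y)^2* sqrt(Y^2+c2)^3)"
      using qpos Y by simp
    then show "Gf c2 Y \<le> 2/(3*c2^2)" using Gf_key[OF c2 Y] by linarith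
    show "Gf c2 Y \<ge> 0" unfolding Gf_def using Y c2 qpos by simp
  qed
  have pos: "2/(3*c2^2) > 0" using c2 by simp
  show "Gf c2 X \<le> 2/(3*c2^2)"
  proof (cases "X \<ge> 0")
    case True then show ?thesis using main by blast
  next
    case False
    then have "Gf c2 (-X) \<ge> 0" using main by simp
    then show ?thesis using Gf_odd[of c2 X] pos by linarith
  qed
  show "Gf c2 X \<ge> - (2/(3*c2^2))"
  proof (cases "X \<ge> 0")
    case True then show ?thesis using main(2)[of X] pos by linarith
  next
    case False
    then have "Gf c2 (-X) \<le> 2/(3*c2^2)" using main by simp
    then show ?thesis using Gf_odd[of c2 X] by simp
  qed
qed

lemma Gf_tail:
  assumes c2: "c2 > 0" and T: "T > 0" and X: "X \<ge> T"
  shows "Gf c2 X \<ge> 2/(3*c2^2) - 1/T^4"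
proof -
  define q where "q = sqrt(X^2+c2)"
  have qpos: "q > 0" unfolding q_def using c2 by (simp add: add_nonneg_pos)
  have Xq: "X \<le> q" unfolding q_def by (rule real_le_rsqrt) (use c2 in simp)
  have X0: "X > 0" using X T by simp
  have a: "(q+X)^2 \<ge> q^2" using X0 qpos by (simp add: power_mono)
  have "(2*q + X) / (3*(q+X)^2*q^3) \<le> (3*q) / (3*q^2*q^3)"
  proof (rule frac_le)
    show "0 \<le> 3*q" using qpos by simp
    show "2*q+X \<le> 3*q" using Xq by simp
    show "0 < 3*q^2*q^3" using qpos by simp
    have "q^2*q^3 \<le> (q+X)^2*q^3" by (rule mult_right_mono[OF a]) (use qpos in simp)
    then show "3*q^2*q^3 \<le> 3*(q+X)^2*q^3" by simp
  qed
  also have "\<dots> = 1/q^4" using qpos by (simp add: field_simps power2_eq_square power3_eq_cube) (simp add: eval_nat_numeral ac_simps)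
  also have "\<dots> \<le> 1/T^4"
    using qpos T Xq X by (intro divide_left_mono power_mono mult_pos_pos) auto
  finally have "2/(3*c2^2) - Gf c2 X \<le> 1/T^4"
    using Gf_key[OF c2, of X] X0 unfolding q_def by simp
  then show ?thesis by linarith
qed

definition F2 :: "real \<Rightarrow> real \<Rightarrow> real \<Rightarrow> real" where
  "F2 \<Psi> \<Omega> v = arctan ((v - \<Omega>)/\<Psi>) / \<Psi>"

lemma F2_deriv:
  assumes P: "\<Psi> > 0"
  shows "(F2 \<Psi> \<Omega> has_real_derivative 1/((v-\<Omega>)^2 + \<Psi>^2)) (at v)"
proof -
  have d2: "((\<lambda>v. (v - \<Omega>)/\<Psi>) has_real_derivative 1/\<Psi>) (at v)"
    using P by (auto intro!: derivative_eq_intros)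
  have "((\<lambda>v. arctan ((v - \<Omega>)/\<Psi>)) has_real_derivative inverse (1 + ((v - \<Omega>)/\<Psi>)^2) * (1/\<Psi>)) (at v)"
    using DERIV_chain2[OF DERIV_arctan d2] .
  from DERIV_cdivide[OF this, of \<Psi>]
  have "(F2 \<Psi> \<Omega> has_real_derivative inverse (1 + ((v - \<Omega>)/\<Psi>)^2) * (1/\<Psi>) / \<Psi>) (at v)"
    unfolding F2_def[abs_def] .
  moreover have "inverse (1 + ((v - \<Omega>)/\<Psi>)^2) * (1/\<Psi>) / \<Psi> = 1/((v-\<Omega>)^2 + \<Psi>^2)"
  proof -
    define D where "D = (v-\<Omega>)^2 + \<Psi>^2"
    have Dpos: "D > 0" unfolding D_def using P by (simp add: add_nonneg_pos)
    have e: "1 + ((v - \<Omega>)/\<Psi>)^2 = D/\<Psi>^2" unfolding D_def using P by (simp add: power_divide field_simps)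
    have "inverse (D/\<Psi>^2) * (1/\<Psi>) / \<Psi> = 1/D" using P Dpos by (simp add: field_simps power2_eq_square)
    then show ?thesis unfolding e D_def .
  qed
  ultimately show ?thesis by simp
qed

lemma F2_bound:
  assumes P: "\<Psi> > 0"
  shows "\<bar>F2 \<Psi> \<Omega> v\<bar> \<le> pi/(2*\<Psi>)"
proof -
  have a: "\<bar>arctan ((v - \<Omega>)/\<Psi>)\<bar> \<le> pi/2" using arctan_bounded[of "(v - \<Omega>)/\<Psi>"] by auto
  have "\<bar>F2 \<Psi> \<Omega> v\<bar> = \<bar>arctan ((v - \<Omega>)/\<Psi>)\<bar> / \<Psi>" unfolding F2_def using P by (simp add: abs_divide)
  also have "\<dots> \<le> (pi/2) / \<Psi>" using P a by (intro divide_right_mono) auto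
  also have "\<dots> = pi/(2*\<Psi>)" by simp
  finally show ?thesis .
qed

lemma unimodal_sq:
  fixes \<phi> :: "real \<Rightarrow> real"
  assumes "\<And>a b. 0 \<le> a \<Longrightarrow> a \<le> b \<Longrightarrow> \<phi> b \<le> \<phi> a"
  shows "\<And>x y. x \<le> y \<Longrightarrow> y \<le> s \<Longrightarrow> \<phi> ((x-s)^2) \<le> \<phi> ((y-s)^2)"
    and "\<And>x y. s \<le> x \<Longrightarrow> x \<le> y \<Longrightarrow> \<phi> ((y-s)^2) \<le> \<phi> ((x-s)^2)"
proof -
  fix x y :: real
  assume "x \<le> y" "y \<le> s"
  then have "(s-y)^2 \<le> (s-x)^2" by (intro power_mono) auto
  then have "(y-s)^2 \<le> (x-s)^2" by (simp add: power2_commute)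
  then show "\<phi> ((x-s)^2) \<le> \<phi> ((y-s)^2)" using assms by simp
next
  fix x y :: real
  assume "s \<le> x" "x \<le> y"
  then have "(x-s)^2 \<le> (y-s)^2" by (intro power_mono) auto
  then show "\<phi> ((y-s)^2) \<le> \<phi> ((x-s)^2)" using assms by simp
qed



lemma sq_mono:
  fixes x y s :: real
  shows "x \<le> y \<Longrightarrow> y \<le> s \<Longrightarrow> (y-s)^2 \<le> (x-s)^2"
    and "s \<le> x \<Longrightarrow> x \<le> y \<Longrightarrow> (x-s)^2 \<le> (y-s)^2"
proof -
  assume "x \<le> y" "y \<le> s"
  then have "(s-y)^2 \<le> (s-x)^2" by (intro power_mono) auto
  then show "(y-s)^2 \<le> (x-s)^2" by (simp add: power2_commute)
next
  assume "s \<le> x" "x \<le> y"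
  then show "(x-s)^2 \<le> (y-s)^2" by (intro power_mono) auto
qed

lemma riemann_int:
  fixes f F :: "real \<Rightarrow> real" and \<epsilon> s B :: real and a b :: int
  assumes eps: "\<epsilon> > 0"
    and der: "\<And>x. (F has_real_derivative f x) (at x)"
    and inc: "\<And>x y. x \<le> y \<Longrightarrow> y \<le> s \<Longrightarrow> f x \<le> f y"
    and dec: "\<And>x y. s \<le> x \<Longrightarrow> x \<le> y \<Longrightarrow> f y \<le> f x"
    and nn: "\<And>x. 0 \<le> f x" and bd: "\<And>x. f x \<le> B"
    and ab: "a \<le> b + 1"
  shows "\<epsilon> * (\<Sum>n\<in>{a..b}. f (of_int n * \<epsilon>)) \<le> F (of_int (b+1) * \<epsilon>) - F (of_int a * \<epsilon>) + \<epsilon> * B"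
    and "F (of_int (b+1) * \<epsilon>) - F (of_int a * \<epsilon>) \<le> \<epsilon> * (\<Sum>n\<in>{a..b}. f (of_int n * \<epsilon>)) + \<epsilon> * B"
proof -
  define k where "k = nat (b+1-a)"
  have ak: "a + int k = b+1" using ab k_def by simp
  have set: "{a..<b+1} = {a..b}" by (rule atLeastLessThanPlusOne_atLeastAtMost_int)
  have st: "\<epsilon> * (\<Sum>n\<in>{a..<a+int k}. f (of_int n * \<epsilon>)) \<le> F (of_int (a + int k) * \<epsilon>) - F (of_int a * \<epsilon>)
           + \<epsilon> * (if of_int (a + int k) * \<epsilon> \<le> s then 0 else B - f (of_int (a + int k) * \<epsilon>))
       \<and> F (of_int (a + int k) * \<epsilon>) - F (of_int a * \<epsilon>) \<le> \<epsilon> * (\<Sum>n\<in>{a..<a+int k}. f (of_int n * \<epsilon>))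
           + \<epsilon> * (if of_int (a + int k) * \<epsilon> \<le> s then f (of_int (a + int k) * \<epsilon>) else B)"
    by (rule riemann_step[OF eps der inc dec nn bd])
  have B0: "0 \<le> B" using nn[of 0] bd[of 0] by linarith
  define y where "y = of_int (b+1) * \<epsilon>"
  have s1: "\<epsilon> * (if y \<le> s then 0 else B - f y) \<le> \<epsilon> * B"
    using eps nn[of y] B0 by (intro mult_left_mono) auto
  have s2: "\<epsilon> * (if y \<le> s then f y else B) \<le> \<epsilon> * B"
    using eps bd[of y] B0 by (intro mult_left_mono) auto
  from st have st': "\<epsilon> * (\<Sum>n\<in>{a..b}. f (of_int n * \<epsilon>)) \<le> F y - F (of_int a * \<epsilon>)
           + \<epsilon> * (if y \<le> s then 0 else B - f y)
       \<and> F y - F (of_int a * \<epsilon>) \<le> \<epsilon> * (\<Sum>n\<in>{a..b}. f (of_int n * \<epsilon>))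
           + \<epsilon> * (if y \<le> s then f y else B)"
    unfolding ak set y_def .
  show "\<epsilon> * (\<Sum>n\<in>{a..b}. f (of_int n * \<epsilon>)) \<le> F (of_int (b+1) * \<epsilon>) - F (of_int a * \<epsilon>) + \<epsilon> * B"
    using st' s1 unfolding y_def by linarith
  show "F (of_int (b+1) * \<epsilon>) - F (of_int a * \<epsilon>) \<le> \<epsilon> * (\<Sum>n\<in>{a..b}. f (of_int n * \<epsilon>)) + \<epsilon> * B"
    using st' s2 unfolding y_def by linarith
qed

lemma inner_bounds:
  fixes c2 s \<epsilon> :: real and M :: nat
  assumes c2: "c2 > 0" and eps: "\<epsilon> > 0"
  shows "\<epsilon> * (\<Sum>n\<in>{- int M..int M}. 1 / sqrt ((of_int n * \<epsilon> - s)^2 + c2)^5) \<le> 4/(3*c2^2) + \<epsilon> * (1 / sqrt c2^5)"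
    and "T > 0 \<Longrightarrow> real M * \<epsilon> \<ge> \<bar>s\<bar> + T \<Longrightarrow>
         4/(3*c2^2) - 2/T^4 - \<epsilon> * (1 / sqrt c2^5) \<le> \<epsilon> * (\<Sum>n\<in>{- int M..int M}. 1 / sqrt ((of_int n * \<epsilon> - s)^2 + c2)^5)"
proof -
  define f where "f u = 1 / sqrt ((u - s)^2 + c2)^5" for u
  define F where "F u = Gf c2 (u - s)" for u
  have der: "(F has_real_derivative f x) (at x)" for x
  proof -
    have d: "((\<lambda>u. u - s) has_real_derivative 1) (at x)" by (auto intro!: derivative_eq_intros)
    from DERIV_chain2[OF Gf_deriv[OF c2, of "x-s"] d]
    show ?thesis unfolding F_def[abs_def] f_def by simp
  qed
  have phi: "1 / sqrt (b + c2)^5 \<le> 1 / sqrt (a + c2)^5" if "0 \<le> a" "a \<le> b" for a b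
  proof -
    have p: "0 < sqrt (a + c2)" using c2 that by simp
    have "sqrt (a + c2) \<le> sqrt (b + c2)" using that by simp
    then have "sqrt (a + c2)^5 \<le> sqrt (b + c2)^5" using p by (intro power_mono) auto
    moreover have "0 < b + c2" using c2 that by linarith
    ultimately show ?thesis using p by (intro divide_left_mono mult_pos_pos zero_less_power) auto
  qed
  have inc: "f x \<le> f y" if "x \<le> y" "y \<le> s" for x y
    unfolding f_def by (rule phi) (use sq_mono(1)[OF that] in simp_all)
  have dec: "f y \<le> f x" if "s \<le> x" "x \<le> y" for x y
    unfolding f_def by (rule phi) (use sq_mono(2)[OF that] in simp_all)
  have nn: "0 \<le> f x" for x
  proof -
    have "0 < (x - s)^2 + c2" using c2 by (simp add: add_nonneg_pos)
    then show ?thesis unfolding f_def by simp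
  qed
  have bd: "\<And>x. f x \<le> 1 / sqrt c2^5" unfolding f_def using phi[of 0] by simp
  have ab: "- int M \<le> int M + 1" by simp
  note R = riemann_int[where f=f and F=F and s=s and B="1 / sqrt c2^5" and \<epsilon>=\<epsilon> and a="- int M" and b="int M", OF eps der inc dec nn bd ab]
  have F1: "F (of_int (int M + 1) * \<epsilon>) = Gf c2 ((real M + 1) * \<epsilon> - s)" unfolding F_def by simp
  have F2: "F (of_int (- int M) * \<epsilon>) = - Gf c2 (real M * \<epsilon> + s)"
  proof -
    have "of_int (- int M) * \<epsilon> - s = - (real M * \<epsilon> + s)" by simp
    then show ?thesis unfolding F_def by (simp only: Gf_odd)
  qed
  have sumf: "(\<Sum>n\<in>{- int M..int M}. f (of_int n * \<epsilon>)) = (\<Sum>n\<in>{- int M..int M}. 1 / sqrt ((of_int n * \<epsilon> - s)^2 + c2)^5)"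
    unfolding f_def ..
  show "\<epsilon> * (\<Sum>n\<in>{- int M..int M}. 1 / sqrt ((of_int n * \<epsilon> - s)^2 + c2)^5) \<le> 4/(3*c2^2) + \<epsilon> * (1 / sqrt c2^5)"
    using R(1) Gf_le[OF c2, of "(real M + 1) * \<epsilon> - s"] Gf_le[OF c2, of "real M * \<epsilon> + s"]
    unfolding F1 F2 sumf by linarith
  assume T: "T > 0" and MT: "real M * \<epsilon> \<ge> \<bar>s\<bar> + T"
  have "(real M + 1) * \<epsilon> - s \<ge> T" using MT eps by (simp add: algebra_simps)
  note t1 = Gf_tail[OF c2 T this]
  have "real M * \<epsilon> + s \<ge> T" using MT by linarith
  note t2 = Gf_tail[OF c2 T this]
  show "4/(3*c2^2) - 2/T^4 - \<epsilon> * (1 / sqrt c2^5) \<le> \<epsilon> * (\<Sum>n\<in>{- int M..int M}. 1 / sqrt ((of_int n * \<epsilon> - s)^2 + c2)^5)"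
    using R(2) t1 t2 unfolding F1 F2 sumf by linarith
qed

lemma outer_bounds:
  fixes \<Psi> \<Omega> \<epsilon> :: real and K :: nat
  assumes P: "\<Psi> > 0" and eps: "\<epsilon> > 0"
  shows "\<epsilon> * (\<Sum>n\<in>{- int K..int K}. 1 / ((of_int n * \<epsilon> - \<Omega>)^2 + \<Psi>^2)) \<le> pi/\<Psi> + \<epsilon> * (1/\<Psi>^2)"
    and "F2 \<Psi> \<Omega> ((real K + 1) * \<epsilon>) - F2 \<Psi> \<Omega> (- (real K * \<epsilon>)) - \<epsilon> * (1/\<Psi>^2)
           \<le> \<epsilon> * (\<Sum>n\<in>{- int K..int K}. 1 / ((of_int n * \<epsilon> - \<Omega>)^2 + \<Psi>^2))"
proof -
  define f where "f u = 1 / ((u - \<Omega>)^2 + \<Psi>^2)" for u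
  have der: "(F2 \<Psi> \<Omega> has_real_derivative f x) (at x)" for x
    unfolding f_def by (rule F2_deriv[OF P])
  have phi: "1 / (b + \<Psi>^2) \<le> 1 / (a + \<Psi>^2)" if "0 \<le> a" "a \<le> b" for a b
    using that P by (intro divide_left_mono mult_pos_pos) (auto simp: add_nonneg_pos)
  have inc: "f x \<le> f y" if "x \<le> y" "y \<le> \<Omega>" for x y
    unfolding f_def by (rule phi) (use sq_mono(1)[OF that] in simp_all)
  have dec: "f y \<le> f x" if "\<Omega> \<le> x" "x \<le> y" for x y
    unfolding f_def by (rule phi) (use sq_mono(2)[OF that] in simp_all)
  have nn: "\<And>x. 0 \<le> f x" unfolding f_def by simp
  have bd: "\<And>x. f x \<le> 1 / \<Psi>^2" unfolding f_def using phi[of 0] by simp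
  have ab: "- int K \<le> int K + 1" by simp
  note R = riemann_int[where f=f and F="F2 \<Psi> \<Omega>" and s=\<Omega> and B="1 / \<Psi>^2" and \<epsilon>=\<epsilon> and a="- int K" and b="int K", OF eps der inc dec nn bd ab]
  have e1: "of_int (int K + 1) * \<epsilon> = (real K + 1) * \<epsilon>" by simp
  have e2: "of_int (- int K) * \<epsilon> = - (real K * \<epsilon>)" by simp
  have sumf: "(\<Sum>n\<in>{- int K..int K}. f (of_int n * \<epsilon>)) = (\<Sum>n\<in>{- int K..int K}. 1 / ((of_int n * \<epsilon> - \<Omega>)^2 + \<Psi>^2))"
    unfolding f_def ..
  have b1: "\<bar>F2 \<Psi> \<Omega> ((real K + 1) * \<epsilon>)\<bar> \<le> pi/(2*\<Psi>)" by (rule F2_bound[OF P])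
  have b2: "\<bar>F2 \<Psi> \<Omega> (- (real K * \<epsilon>))\<bar> \<le> pi/(2*\<Psi>)" by (rule F2_bound[OF P])
  have pp: "pi/(2*\<Psi>) + pi/(2*\<Psi>) = pi/\<Psi>" by (simp add: field_simps)
  show "\<epsilon> * (\<Sum>n\<in>{- int K..int K}. 1 / ((of_int n * \<epsilon> - \<Omega>)^2 + \<Psi>^2)) \<le> pi/\<Psi> + \<epsilon> * (1/\<Psi>^2)"
    using R(1) b1 b2 pp unfolding e1 e2 sumf by linarith
  show "F2 \<Psi> \<Omega> ((real K + 1) * \<epsilon>) - F2 \<Psi> \<Omega> (- (real K * \<epsilon>)) - \<epsilon> * (1/\<Psi>^2)
           \<le> \<epsilon> * (\<Sum>n\<in>{- int K..int K}. 1 / ((of_int n * \<epsilon> - \<Omega>)^2 + \<Psi>^2))"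
    using R(2) unfolding e1 e2 sumf by linarith
qed

lemma elim_T:
  fixes x S C :: real
  assumes h: "\<And>T. T > 0 \<Longrightarrow> x - C / T^4 \<le> S" and C: "C \<ge> 0"
  shows "x \<le> S"
proof (rule ccontr)
  assume "\<not> x \<le> S"
  then have d: "x - S > 0" by simp
  define T where "T = max 1 (C/(x-S) + 1)"
  have T1: "T \<ge> 1" unfolding T_def by simp
  have T0: "T > 0" using T1 by simp
  have "T^1 \<le> T^4" using T1 by (intro power_increasing) auto
  then have "C / T^4 \<le> C / T" using C T0 by (intro divide_left_mono) auto
  moreover have "C / T < x - S"
  proof -
    have "C/(x-S) < T" unfolding T_def by simp
    then have "C < T * (x - S)" using d by (simp add: divide_less_eq)
    then show ?thesis using T0 by (simp add: divide_less_eq mult.commute)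
  qed
  ultimately have "x - C/T^4 > S" by linarith
  with h[OF T0] show False by linarith
qed

lemma filterlim_lin:
  fixes a b :: real
  assumes "a > 0"
  shows "filterlim (\<lambda>K::nat. b + a * real K) at_top sequentially"
  by (rule filterlim_tendsto_add_at_top[OF tendsto_const filterlim_tendsto_pos_mult_at_top[OF tendsto_const assms filterlim_real_sequentially]])

lemma F2_lim:
  assumes P: "\<Psi> > 0" and eps: "\<epsilon> > 0"
  shows "(\<lambda>K. F2 \<Psi> \<Omega> ((real K + 1) * \<epsilon>) - F2 \<Psi> \<Omega> (- (real K * \<epsilon>))) \<longlonglongrightarrow> pi/\<Psi>"
proof -
  have l1: "filterlim (\<lambda>K::nat. (\<epsilon> - \<Omega>)/\<Psi> + (\<epsilon>/\<Psi>) * real K) at_top sequentially"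
    by (rule filterlim_lin) (use P eps in simp)
  have l2: "filterlim (\<lambda>K::nat. \<Omega>/\<Psi> + (\<epsilon>/\<Psi>) * real K) at_top sequentially"
    by (rule filterlim_lin) (use P eps in simp)
  have a1: "(\<lambda>K. arctan ((\<epsilon> - \<Omega>)/\<Psi> + (\<epsilon>/\<Psi>) * real K)) \<longlonglongrightarrow> pi/2"
    by (rule filterlim_compose[OF tendsto_arctan_at_top l1])
  have a2: "(\<lambda>K. arctan (\<Omega>/\<Psi> + (\<epsilon>/\<Psi>) * real K)) \<longlonglongrightarrow> pi/2"
    by (rule filterlim_compose[OF tendsto_arctan_at_top l2])
  have "(\<lambda>K. arctan ((\<epsilon> - \<Omega>)/\<Psi> + (\<epsilon>/\<Psi>) * real K) / \<Psi> + arctan (\<Omega>/\<Psi> + (\<epsilon>/\<Psi>) * real K) / \<Psi>)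
          \<longlonglongrightarrow> (pi/2)/\<Psi> + (pi/2)/\<Psi>"
    by (intro tendsto_intros a1 a2) (use P in simp)+
  moreover have "(pi/2)/\<Psi> + (pi/2)/\<Psi> = pi/\<Psi>" by simp
  moreover have "F2 \<Psi> \<Omega> ((real K + 1) * \<epsilon>) - F2 \<Psi> \<Omega> (- (real K * \<epsilon>)) =
       arctan ((\<epsilon> - \<Omega>)/\<Psi> + (\<epsilon>/\<Psi>) * real K) / \<Psi> + arctan (\<Omega>/\<Psi> + (\<epsilon>/\<Psi>) * real K) / \<Psi>" for K
  proof -
    have h1: "((real K + 1) * \<epsilon> - \<Omega>)/\<Psi> = (\<epsilon> - \<Omega>)/\<Psi> + (\<epsilon>/\<Psi>) * real K"
      using P by (simp add: field_simps)
    have h2: "(- (real K * \<epsilon>) - \<Omega>)/\<Psi> = - (\<Omega>/\<Psi> + (\<epsilon>/\<Psi>) * real K)"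
      using P by (simp add: field_simps)
    have f1: "F2 \<Psi> \<Omega> ((real K + 1) * \<epsilon>) = arctan ((\<epsilon> - \<Omega>)/\<Psi> + (\<epsilon>/\<Psi>) * real K) / \<Psi>"
      unfolding F2_def h1 ..
    have f2: "F2 \<Psi> \<Omega> (- (real K * \<epsilon>)) = - (arctan (\<Omega>/\<Psi> + (\<epsilon>/\<Psi>) * real K) / \<Psi>)"
      unfolding F2_def h2 arctan_minus by simp
    show ?thesis unfolding f1 f2 by simp
  qed
  ultimately show ?thesis by simp
qed



lemma term_eq:
  fixes A d lam r \<theta> \<phi> :: real and ny nz :: int
  assumes r: "r > 0" and d: "d > 0" and P: "Psi_s \<theta> \<phi> > 0" and A: "A > 0"
  shows "(cmod (chan_entry A d lam r \<theta> \<phi> ny nz))^2 =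
     A/d^2 * (d/r) * Psi_s \<theta> \<phi> * ((of_int nz*(d/r) - Omega_s \<theta>)^2 + (Psi_s \<theta> \<phi>)^2) / (4*pi) *
     ((d/r) * (1 / sqrt ((of_int ny*(d/r) - Phi_s \<theta> \<phi>)^2 + ((of_int nz*(d/r) - Omega_s \<theta>)^2 + (Psi_s \<theta> \<phi>)^2))^5))"
proof -
  define \<Psi> where "\<Psi> = Psi_s \<theta> \<phi>"
  define \<Phi> where "\<Phi> = Phi_s \<theta> \<phi>"
  define \<Omega> where "\<Omega> = Omega_s \<theta>"
  define \<epsilon> where "\<epsilon> = d / r"
  define c2 where "c2 = (of_int nz*\<epsilon> - \<Omega>)^2 + \<Psi>^2"
  define Q where "Q = (of_int ny*\<epsilon> - \<Phi>)^2 + c2"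
  define qq where "qq = sqrt Q"
  have Ppos: "\<Psi> > 0" using P unfolding \<Psi>_def .
  have c2pos: "c2 > 0" unfolding c2_def using Ppos by (simp add: add_nonneg_pos)
  have Qpos: "Q > 0" unfolding Q_def using c2pos by (simp add: add_nonneg_pos)
  have qqpos: "qq > 0" unfolding qq_def using Qpos by simp
  have rn: "elem_dist d r \<theta> \<phi> ny nz = r * qq"
    unfolding elem_dist_def Let_def qq_def Q_def c2_def \<Psi>_def \<Phi>_def \<Omega>_def \<epsilon>_def by (simp add: add.assoc)
  define X where "X = A * (r^3*\<Psi>^3 + r*\<Psi>*(r*\<Omega> - of_int nz*d)^2) / (4*pi*(r*qq)^5)"
  have ce: "chan_entry A d lam r \<theta> \<phi> ny nz = complex_of_real (sqrt X) * cis (- (2*pi/lam) * (r*qq))"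
    unfolding chan_entry_def Let_def rn unfolding X_def \<Psi>_def \<Omega>_def by (rule refl)
  have h1: "(r*\<Omega> - of_int nz*d)^2 = r^2*(of_int nz*\<epsilon> - \<Omega>)^2"
  proof -
    have "r*\<Omega> - of_int nz*d = -(r*(of_int nz*\<epsilon> - \<Omega>))" using r unfolding \<epsilon>_def by (simp add: field_simps)
    then show ?thesis by (simp add: power_mult_distrib)
  qed
  have num: "r^3*\<Psi>^3 + r*\<Psi>*(r*\<Omega> - of_int nz*d)^2 = r^3*\<Psi>*c2"
    unfolding h1 c2_def by algebra
  have p5: "(r*qq)^5 = r^3*(r^2*qq^5)" by (simp add: eval_nat_numeral ac_simps)
  have Xeq: "X = A*\<Psi>*c2/(4*pi*(r^2*qq^5))"
  proof -
    have "X = (r^3*(A*\<Psi>*c2))/(r^3*(4*pi*(r^2*qq^5)))" unfolding X_def num p5 by (simp only: ac_simps)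
    also have "\<dots> = A*\<Psi>*c2/(4*pi*(r^2*qq^5))" by (rule mult_divide_mult_cancel_left) (use r in simp)
    finally show ?thesis .
  qed
  have Xnn: "X \<ge> 0" unfolding Xeq using A Ppos c2pos qqpos r by simp
  have "cmod (chan_entry A d lam r \<theta> \<phi> ny nz) = sqrt X"
    unfolding ce using Xnn by (simp add: norm_mult)
  then have "(cmod (chan_entry A d lam r \<theta> \<phi> ny nz))^2 = X" using Xnn by simp
  also have "X = A/d^2 * \<epsilon> * \<Psi> * c2 / (4*pi) * (\<epsilon> * (1 / qq^5))"
    unfolding Xeq \<epsilon>_def using r d qqpos by (simp add: field_simps power2_eq_square)
  finally show ?thesis unfolding qq_def Q_def c2_def \<epsilon>_def \<Psi>_def \<Phi>_def \<Omega>_def .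
qed

lemma alg_up:
  fixes \<zeta> \<epsilon> \<Psi> c2 :: real
  assumes z: "\<zeta> > 0" and e: "\<epsilon> > 0" and P: "\<Psi> > 0" and c: "c2 \<ge> \<Psi>^2"
  shows "\<zeta>*\<epsilon>*\<Psi>*c2/(4*pi) * (4/(3*c2^2) + \<epsilon>*(1/sqrt c2^5)) \<le> (\<zeta>*\<Psi>/(3*pi) + \<zeta>*\<epsilon>/(4*pi)) * (\<epsilon>*(1/c2))"
    and "(\<zeta>*\<Psi>/(3*pi) - \<zeta>*\<epsilon>/(4*pi)) * (\<epsilon>*(1/c2)) - (2/T^4) * (\<zeta>*\<epsilon>*\<Psi>*c2/(4*pi))
          \<le> \<zeta>*\<epsilon>*\<Psi>*c2/(4*pi) * (4/(3*c2^2) - 2/T^4 - \<epsilon>*(1/sqrt c2^5))"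
proof -
  have c2pos: "c2 > 0" using c P by (meson less_le_trans zero_less_power)
  define tc where "tc = sqrt c2"
  have tcpos: "tc > 0" unfolding tc_def using c2pos by simp
  have tc2: "tc^2 = c2" unfolding tc_def using c2pos by simp
  have Ptc: "\<Psi> \<le> tc" unfolding tc_def using c P by (simp add: real_le_rsqrt)
  have s5: "sqrt c2^5 = c2^2 * tc"
  proof -
    have "tc^5 = tc^2 * tc^2 * tc" by (simp add: eval_nat_numeral ac_simps)
    then show ?thesis unfolding tc_def[symmetric] tc2 by (simp add: power2_eq_square)
  qed
  have e1: "\<zeta>*\<epsilon>*\<Psi>*c2/(4*pi) * (4/(3*c2^2)) = \<zeta>*\<Psi>/(3*pi) * (\<epsilon>*(1/c2))"
    using c2pos by (simp add: field_simps power2_eq_square)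
  have e2: "\<zeta>*\<epsilon>*\<Psi>*c2/(4*pi) * (\<epsilon>*(1/sqrt c2^5)) = \<zeta>*\<epsilon>/(4*pi)*(\<epsilon>*(1/c2)) * (\<Psi>/tc)"
    unfolding s5 using c2pos tcpos by (simp add: field_simps power2_eq_square)
  have le1: "\<Psi>/tc \<le> 1" using Ptc tcpos by simp
  have nn: "0 \<le> \<zeta>*\<epsilon>/(4*pi)*(\<epsilon>*(1/c2))" using z e c2pos by simp
  have e3: "\<zeta>*\<epsilon>/(4*pi)*(\<epsilon>*(1/c2)) * (\<Psi>/tc) \<le> \<zeta>*\<epsilon>/(4*pi)*(\<epsilon>*(1/c2))"
    using mult_left_le[OF le1 nn] .
  define co where "co = \<zeta>*\<epsilon>*\<Psi>*c2/(4*pi)"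
  define a1 where "a1 = \<zeta>*\<Psi>/(3*pi)"
  define a2 where "a2 = \<zeta>*\<epsilon>/(4*pi)"
  define w where "w = \<epsilon>*(1/c2)"
  have E1: "co * (4/(3*c2^2)) = a1 * w" using e1 unfolding co_def a1_def w_def .
  have E2: "co * (\<epsilon>*(1/sqrt c2^5)) = a2 * w * (\<Psi>/tc)" using e2 unfolding co_def a2_def w_def .
  have E3: "a2 * w * (\<Psi>/tc) \<le> a2 * w" using e3 unfolding a2_def w_def .
  have L1: "co * (4/(3*c2^2) + \<epsilon>*(1/sqrt c2^5)) = co * (4/(3*c2^2)) + co * (\<epsilon>*(1/sqrt c2^5))"
    by (simp add: distrib_left)
  have L2: "(a1 + a2) * w = a1 * w + a2 * w" by (simp add: distrib_right)
  show "\<zeta>*\<epsilon>*\<Psi>*c2/(4*pi) * (4/(3*c2^2) + \<epsilon>*(1/sqrt c2^5)) \<le> (\<zeta>*\<Psi>/(3*pi) + \<zeta>*\<epsilon>/(4*pi)) * (\<epsilon>*(1/c2))"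
    unfolding co_def[symmetric] a1_def[symmetric] a2_def[symmetric] w_def[symmetric]
    using L1 L2 E1 E2 E3 by linarith
  have L3: "co * (4/(3*c2^2) - 2/T^4 - \<epsilon>*(1/sqrt c2^5)) = co * (4/(3*c2^2)) - (2/T^4) * co - co * (\<epsilon>*(1/sqrt c2^5))"
    by (simp add: algebra_simps)
  have L4: "(a1 - a2) * w = a1 * w - a2 * w" by (simp add: left_diff_distrib)
  show "(\<zeta>*\<Psi>/(3*pi) - \<zeta>*\<epsilon>/(4*pi)) * (\<epsilon>*(1/c2)) - (2/T^4) * (\<zeta>*\<epsilon>*\<Psi>*c2/(4*pi))
          \<le> \<zeta>*\<epsilon>*\<Psi>*c2/(4*pi) * (4/(3*c2^2) - 2/T^4 - \<epsilon>*(1/sqrt c2^5))"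
    unfolding co_def[symmetric] a1_def[symmetric] a2_def[symmetric] w_def[symmetric]
    using L3 L4 E1 E2 E3 by linarith
qed



theorem corollary5:
  fixes p \<alpha> A d lam \<theta> \<phi> :: real and L :: nat
  assumes "p > 0" and "L > 0" and "\<alpha> > 0"
    and "A > 0" and "d > sqrt A" and "lam > 0"
    and "0 \<le> \<theta>" and "\<theta> \<le> pi" and "- (pi / 2) \<le> \<phi>" and "\<phi> \<le> pi / 2"
    and "Psi_s \<theta> \<phi> > 0"
  shows "\<exists>Rlim :: real \<Rightarrow> real.
           (\<forall>r > 0. ((\<lambda>(My, Mz). sensing_rate p L \<alpha> A d lam r \<theta> \<phi> My Mz)
                        \<longlongrightarrow> Rlim r) (sequentially \<times>\<^sub>F sequentially))
         \<and> (Rlim \<longlongrightarrow> 1 / real L * log 2 (1 + p * real L * \<alpha> * (A / d\<^sup>2)\<^sup>2 / 9)) at_top"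
proof -
  define \<Psi> where "\<Psi> = Psi_s \<theta> \<phi>"
  define \<Phi> where "\<Phi> = Phi_s \<theta> \<phi>"
  define \<Omega> where "\<Omega> = Omega_s \<theta>"
  define \<zeta> where "\<zeta> = A / d^2"
  have P: "\<Psi> > 0" using assms(11) unfolding \<Psi>_def .
  have Apos: "A > 0" by (rule assms(4))
  have d: "d > 0" using assms(5) Apos by (meson less_trans real_sqrt_gt_zero)
  have z: "\<zeta> > 0" unfolding \<zeta>_def using Apos d by simp
  define tm where "tm r ny nz = (cmod (chan_entry A d lam r \<theta> \<phi> ny nz))^2" for r ny nz
  define Pm where "Pm r My Mz = (\<Sum>ny\<in>{- int My..int My}. \<Sum>nz\<in>{- int Mz..int Mz}. tm r ny nz)" for r My Mz
  define c2 where "c2 r nz = (of_int nz*(d/r) - \<Omega>)^2 + \<Psi>^2" for r nz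
  define coef where "coef r nz = \<zeta> * (d/r) * \<Psi> * c2 r nz / (4*pi)" for r nz
  define inner where "inner r My nz = (d/r) * (\<Sum>ny\<in>{- int My..int My}. 1 / sqrt ((of_int ny*(d/r) - \<Phi>)^2 + c2 r nz)^5)" for r My nz
  have c2ge: "c2 r nz \<ge> \<Psi>^2" for r nz unfolding c2_def by simp
  have c2pos: "c2 r nz > 0" for r nz using c2ge[of r nz] P by (meson less_le_trans zero_less_power)
  have tm_eq: "tm r ny nz = coef r nz * ((d/r) * (1 / sqrt ((of_int ny*(d/r) - \<Phi>)^2 + c2 r nz)^5))"
    if r: "r > 0" for r ny nz
    using term_eq[OF r d assms(11) Apos, of lam ny nz]
    unfolding tm_def coef_def c2_def \<zeta>_def \<Psi>_def \<Phi>_def \<Omega>_def .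
  have Pm_eq: "Pm r My Mz = (\<Sum>nz\<in>{- int Mz..int Mz}. coef r nz * inner r My nz)" if r: "r > 0" for r My Mz
    unfolding Pm_def inner_def
    by (subst sum.swap) (simp add: tm_eq[OF r] sum_distrib_left)
  have tm_nn: "tm r ny nz \<ge> 0" for r ny nz unfolding tm_def by simp
  have Pm_nn: "Pm r My Mz \<ge> 0" for r My Mz unfolding Pm_def using tm_nn by (intro sum_nonneg) auto
  have Pm_mono: "Pm r My Mz \<le> Pm r My' Mz'" if "My \<le> My'" "Mz \<le> Mz'" for r My Mz My' Mz'
  proof -
    have "Pm r My Mz \<le> (\<Sum>ny\<in>{- int My..int My}. \<Sum>nz\<in>{- int Mz'..int Mz'}. tm r ny nz)"
      unfolding Pm_def using that tm_nn by (intro sum_mono sum_mono2) auto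
    also have "\<dots> \<le> Pm r My' Mz'"
      unfolding Pm_def using that tm_nn by (intro sum_mono2 sum_nonneg) auto
    finally show ?thesis .
  qed
  define Ub where "Ub r = (\<zeta>*\<Psi>/(3*pi) + \<zeta>*(d/r)/(4*pi)) * (pi/\<Psi> + (d/r)*(1/\<Psi>^2))" for r
  define Lb where "Lb r = (\<zeta>*\<Psi>/(3*pi) - \<zeta>*(d/r)/(4*pi)) * (pi/\<Psi> - (d/r)*(1/\<Psi>^2))" for r
  have upper: "Pm r My Mz \<le> Ub r" if r: "r > 0" for r My Mz
  proof -
    define \<epsilon> where "\<epsilon> = d/r"
    have eps: "\<epsilon> > 0" unfolding \<epsilon>_def using r d by simp
    define K1 where "K1 = \<zeta>*\<Psi>/(3*pi) + \<zeta>*\<epsilon>/(4*pi)"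
    have K1: "K1 \<ge> 0" unfolding K1_def using z P eps by simp
    have each: "coef r nz * inner r My nz \<le> K1 * (\<epsilon> * (1 / ((of_int nz*\<epsilon> - \<Omega>)^2 + \<Psi>^2)))" for nz
    proof -
      have ib: "inner r My nz \<le> 4/(3*c2 r nz^2) + \<epsilon>*(1/sqrt (c2 r nz)^5)"
        using inner_bounds(1)[OF c2pos[of r nz] eps, of \<Phi> My] unfolding inner_def \<epsilon>_def .
      have co: "coef r nz \<ge> 0" unfolding coef_def using z d r P c2pos[of r nz] by simp
      have "coef r nz * inner r My nz \<le> coef r nz * (4/(3*c2 r nz^2) + \<epsilon>*(1/sqrt (c2 r nz)^5))"
        using mult_left_mono[OF ib co] .
      also have "\<dots> \<le> K1 * (\<epsilon> * (1 / c2 r nz))"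
        using alg_up(1)[OF z eps P c2ge[of r nz]] unfolding coef_def K1_def \<epsilon>_def .
      finally show ?thesis unfolding c2_def \<epsilon>_def .
    qed
    have "Pm r My Mz \<le> (\<Sum>nz\<in>{- int Mz..int Mz}. K1 * (\<epsilon> * (1 / ((of_int nz*\<epsilon> - \<Omega>)^2 + \<Psi>^2))))"
      unfolding Pm_eq[OF r] by (intro sum_mono each)
    also have "\<dots> = K1 * (\<epsilon> * (\<Sum>nz\<in>{- int Mz..int Mz}. 1 / ((of_int nz*\<epsilon> - \<Omega>)^2 + \<Psi>^2)))"
      by (simp add: sum_distrib_left)
    also have "\<dots> \<le> K1 * (pi/\<Psi> + \<epsilon> * (1/\<Psi>^2))"
      using outer_bounds(1)[OF P eps, of \<Omega> Mz] K1 by (intro mult_left_mono) auto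
    finally show ?thesis unfolding Ub_def K1_def \<epsilon>_def .
  qed
  define S where "S r = (SUP x\<in>UNIV. Pm r (fst x) (snd x))" for r
  have bdd: "bdd_above (range (\<lambda>x. Pm r (fst x) (snd x)))" if r: "r > 0" for r
    by (rule bdd_aboveI2[where M = "Ub r"]) (use upper[OF r] in auto)
  have S_up: "Pm r My Mz \<le> S r" if r: "r > 0" for r My Mz
    unfolding S_def using cSUP_upper[OF _ bdd[OF r], of "(My, Mz)"] by simp
  have S_le: "S r \<le> Ub r" if r: "r > 0" for r
    unfolding S_def by (rule cSUP_least) (use upper[OF r] in auto)
  have S_lo: "Lb r \<le> S r" if r: "r > 0" and small: "d/r \<le> \<Psi>" for r
  proof -
    define \<epsilon> where "\<epsilon> = d/r"
    have eps: "\<epsilon> > 0" unfolding \<epsilon>_def using r d by simp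
    define K2 where "K2 = \<zeta>*\<Psi>/(3*pi) - \<zeta>*\<epsilon>/(4*pi)"
    have K2: "K2 \<ge> 0"
    proof -
      have "\<epsilon>/4 \<le> \<Psi>/3" using small eps unfolding \<epsilon>_def by simp
      then have "\<zeta>*\<epsilon>/(4*pi) \<le> \<zeta>*\<Psi>/(3*pi)" using z by (simp add: field_simps)
      then show ?thesis unfolding K2_def by simp
    qed
    have stepK: "K2 * (\<epsilon> * (\<Sum>nz\<in>{- int K..int K}. 1 / ((of_int nz*\<epsilon> - \<Omega>)^2 + \<Psi>^2))) \<le> S r" for K
    proof (rule elim_T[where C = "2 * (\<Sum>nz\<in>{- int K..int K}. coef r nz)"])
      have co_nn: "coef r nz \<ge> 0" for nz unfolding coef_def using z d r P c2pos[of r nz] by simp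
      show "0 \<le> 2 * (\<Sum>nz\<in>{- int K..int K}. coef r nz)"
        using co_nn by (simp add: sum_nonneg)
      fix T :: real assume T: "T > 0"
      define M where "M = nat \<lceil>(\<bar>\<Phi>\<bar> + T)/\<epsilon>\<rceil>"
      have MT: "real M * \<epsilon> \<ge> \<bar>\<Phi>\<bar> + T"
      proof -
        have "real M \<ge> (\<bar>\<Phi>\<bar> + T)/\<epsilon>" unfolding M_def by linarith
        then show ?thesis using eps by (simp add: divide_le_eq)
      qed
      have each: "K2 * (\<epsilon> * (1 / ((of_int nz*\<epsilon> - \<Omega>)^2 + \<Psi>^2))) - (2/T^4) * coef r nz \<le> coef r nz * inner r M nz" for nz
      proof -
        have ib: "4/(3*c2 r nz^2) - 2/T^4 - \<epsilon>*(1/sqrt (c2 r nz)^5) \<le> inner r M nz"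
          using inner_bounds(2)[OF c2pos[of r nz] eps T MT] unfolding inner_def \<epsilon>_def .
        have co: "coef r nz \<ge> 0" unfolding coef_def using z d r P c2pos[of r nz] by simp
        have "K2 * (\<epsilon> * (1 / c2 r nz)) - (2/T^4) * coef r nz \<le> coef r nz * (4/(3*c2 r nz^2) - 2/T^4 - \<epsilon>*(1/sqrt (c2 r nz)^5))"
          using alg_up(2)[OF z eps P c2ge[of r nz], of T] unfolding coef_def K2_def \<epsilon>_def .
        also have "\<dots> \<le> coef r nz * inner r M nz" using mult_left_mono[OF ib co] .
        finally show ?thesis unfolding c2_def \<epsilon>_def .
      qed
      have "K2 * (\<epsilon> * (\<Sum>nz\<in>{- int K..int K}. 1 / ((of_int nz*\<epsilon> - \<Omega>)^2 + \<Psi>^2))) - 2 * (\<Sum>nz\<in>{- int K..int K}. coef r nz) / T^4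
          = (\<Sum>nz\<in>{- int K..int K}. K2 * (\<epsilon> * (1 / ((of_int nz*\<epsilon> - \<Omega>)^2 + \<Psi>^2))) - (2/T^4) * coef r nz)"
        by (simp add: sum_subtractf sum_distrib_left sum_divide_distrib)
      also have "\<dots> \<le> (\<Sum>nz\<in>{- int K..int K}. coef r nz * inner r M nz)"
        by (intro sum_mono each)
      also have "\<dots> = Pm r M K" using Pm_eq[OF r] by simp
      also have "\<dots> \<le> S r" by (rule S_up[OF r])
      finally show "K2 * (\<epsilon> * (\<Sum>nz\<in>{- int K..int K}. 1 / ((of_int nz*\<epsilon> - \<Omega>)^2 + \<Psi>^2))) - 2 * (\<Sum>nz\<in>{- int K..int K}. coef r nz) / T^4 \<le> S r" .
    qed
    have stepK2: "K2 * (F2 \<Psi> \<Omega> ((real K + 1) * \<epsilon>) - F2 \<Psi> \<Omega> (- (real K * \<epsilon>)) - \<epsilon> * (1/\<Psi>^2)) \<le> S r" for K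
      using mult_left_mono[OF outer_bounds(2)[OF P eps, of \<Omega> K] K2] stepK[of K] by linarith
    have lim: "(\<lambda>K. K2 * (F2 \<Psi> \<Omega> ((real K + 1) * \<epsilon>) - F2 \<Psi> \<Omega> (- (real K * \<epsilon>)) - \<epsilon> * (1/\<Psi>^2)))
                 \<longlonglongrightarrow> K2 * (pi/\<Psi> - \<epsilon> * (1/\<Psi>^2))"
      by (intro tendsto_intros F2_lim[OF P eps])
    have "K2 * (pi/\<Psi> - \<epsilon> * (1/\<Psi>^2)) \<le> S r"
      by (rule LIMSEQ_le_const2[OF lim]) (use stepK2 in auto)
    then show ?thesis unfolding Lb_def K2_def \<epsilon>_def .
  qed
  have dr0: "((\<lambda>r::real. d/r) \<longlongrightarrow> 0) at_top"
    by (rule tendsto_divide_0[OF tendsto_const filterlim_at_top_imp_at_infinity[OF filterlim_ident]])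
  have lim_target: "\<zeta>/3 = (\<zeta>*\<Psi>/(3*pi) + \<zeta>*0/(4*pi)) * (pi/\<Psi> + 0*(1/\<Psi>^2))"
    using P by (simp add: field_simps)
  have lim_target2: "\<zeta>/3 = (\<zeta>*\<Psi>/(3*pi) - \<zeta>*0/(4*pi)) * (pi/\<Psi> - 0*(1/\<Psi>^2))"
    using P by (simp add: field_simps)
  have Ub_lim: "(Ub \<longlongrightarrow> \<zeta>/3) at_top"
    unfolding Ub_def[abs_def] lim_target by (intro tendsto_intros dr0 | simp)+
  have Lb_lim: "(Lb \<longlongrightarrow> \<zeta>/3) at_top"
    unfolding Lb_def[abs_def] by (subst lim_target2) (intro tendsto_intros dr0 | simp)+
  have S_lim: "(S \<longlongrightarrow> \<zeta>/3) at_top"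
  proof (rule tendsto_sandwich[OF _ _ Lb_lim Ub_lim])
    show "\<forall>\<^sub>F r in at_top. Lb r \<le> S r"
      unfolding eventually_at_top_linorder
    proof (intro exI allI impI)
      fix r assume h: "d/\<Psi> + 1 \<le> r"
      have dp: "d/\<Psi> > 0" using d P by simp
      have r: "r > 0" using h dp by linarith
      have "d/\<Psi> \<le> r" using h by linarith
      then have "d \<le> r * \<Psi>" using P by (simp add: divide_le_eq)
      then have "d/r \<le> \<Psi>" using r by (simp add: divide_le_eq mult.commute)
      then show "Lb r \<le> S r" by (rule S_lo[OF r])
    qed
    show "\<forall>\<^sub>F r in at_top. S r \<le> Ub r"
      unfolding eventually_at_top_linorder
      by (intro exI[of _ 1] allI impI S_le) simp
  qed
  define h where "h x = 1 / real L * log 2 (1 + p * real L * \<alpha> * x^2)" for x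
  have cpos: "p * real L * \<alpha> \<ge> 0" using assms(1-3) by simp
  have h_tend: "((\<lambda>x. h (g x)) \<longlongrightarrow> h y) F" if g: "(g \<longlongrightarrow> y) F" for g :: "'a \<Rightarrow> real" and y F
  proof -
    have pos: "0 < 1 + p * real L * \<alpha> * y^2" using cpos by (simp add: add_pos_nonneg)
    have "((\<lambda>x. 1 + p * real L * \<alpha> * (g x)^2) \<longlongrightarrow> 1 + p * real L * \<alpha> * y^2) F"
      by (intro tendsto_intros g)
    then have "((\<lambda>x. log 2 (1 + p * real L * \<alpha> * (g x)^2)) \<longlongrightarrow> log 2 (1 + p * real L * \<alpha> * y^2)) F"
      by (rule tendsto_log[OF tendsto_const]) (use pos in simp_all)
    then show ?thesis unfolding h_def by (rule tendsto_mult_left)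
  qed
  define Rlim where "Rlim r = h (S r)" for r
  have rate_eq: "sensing_rate p L \<alpha> A d lam r \<theta> \<phi> My Mz = h (Pm r My Mz)" for r My Mz
  proof -
    have cn: "chan_norm A d lam r \<theta> \<phi> My Mz = sqrt (Pm r My Mz)"
      unfolding chan_norm_def Pm_def tm_def ..
    have "sqrt (Pm r My Mz) ^ 4 = (sqrt (Pm r My Mz) ^ 2)^2" by (simp flip: power_mult)
    also have "\<dots> = (Pm r My Mz)^2" using Pm_nn by simp
    finally show ?thesis unfolding sensing_rate_def h_def cn by simp
  qed
  show ?thesis
  proof (intro exI[of _ Rlim] conjI allI impI)
    fix r :: real assume r: "r > 0"
    have Ptend: "((\<lambda>x. Pm r (fst x) (snd x)) \<longlongrightarrow> S r) (sequentially \<times>\<^sub>F sequentially)"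
    proof (rule order_tendstoI)
      fix y assume "y < S r"
      then obtain x where x: "y < Pm r (fst x) (snd x)"
        using less_cSUP_iff[OF _ bdd[OF r], of y] unfolding S_def by auto
      show "\<forall>\<^sub>F z in sequentially \<times>\<^sub>F sequentially. y < Pm r (fst z) (snd z)"
        unfolding eventually_prod_sequentially
      proof (intro exI[of _ "max (fst x) (snd x)"] allI impI)
        fix m n assume "max (fst x) (snd x) \<le> m" "max (fst x) (snd x) \<le> n"
        then have "Pm r (fst x) (snd x) \<le> Pm r n m" by (intro Pm_mono) auto
        then show "y < Pm r (fst (n, m)) (snd (n, m))" using x by simp
      qed
    next
      fix y assume "S r < y"
      then show "\<forall>\<^sub>F z in sequentially \<times>\<^sub>F sequentially. Pm r (fst z) (snd z) < y"
        using S_up[OF r] by (intro always_eventually) (auto intro: le_less_trans)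
    qed
    have feq: "(\<lambda>(My, Mz). sensing_rate p L \<alpha> A d lam r \<theta> \<phi> My Mz) = (\<lambda>x. h (Pm r (fst x) (snd x)))"
      by (auto simp: rate_eq)
    show "((\<lambda>(My, Mz). sensing_rate p L \<alpha> A d lam r \<theta> \<phi> My Mz) \<longlongrightarrow> Rlim r) (sequentially \<times>\<^sub>F sequentially)"
      unfolding feq Rlim_def by (rule h_tend[OF Ptend])
  next
    have "(Rlim \<longlongrightarrow> h (\<zeta>/3)) at_top" unfolding Rlim_def[abs_def] by (rule h_tend[OF S_lim])
    moreover have "h (\<zeta>/3) = 1 / real L * log 2 (1 + p * real L * \<alpha> * (A / d\<^sup>2)\<^sup>2 / 9)"
      unfolding h_def \<zeta>_def by (simp add: power_divide)
    ultimately show "(Rlim \<longlongrightarrow> 1 / real L * log 2 (1 + p * real L * \<alpha> * (A / d\<^sup>2)\<^sup>2 / 9)) at_top" by simp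
  qed
qed

end
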